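(* Let $P_1, \ldots, P_M$ be probability densities on a space $\mathcal{X}$, and let $\pi_1, \ldots, \pi_M \in [0,1]$ with $\sum_{i=1}^M \pi_i = 1$ be arbitrary weights. Then $$ JS(P_1, \ldots, P_M) \le JS_{GM}(P_1, \ldots, P_M), $$ where $JS(P_1,\ldots,P_M) = \sum_{i=1}^M \pi_i\, KL\big(P_i \,\Vert\, \overline{P}\big)$ with $\overline{P} = \sum_{i=1}^M \pi_i P_i$, and $JS_{GM}(P_1,\ldots,P_M) = \sum_{i=1}^M \sum_{j \neq i} \pi_i \pi_j\, KL(P_i \Vert P_j)$.
   Context: For densities $P, Q$ on $\mathcal{X}$, $KL(P\Vert Q) = \int_{\mathcal{X}} P(x)\ln\frac{P(x)}{Q(x)}\,dx$ (the Kullback–Leibler divergence). The quantity $JS_{GM}$ equals $\sum_{i=1}^M \pi_i \int_{\mathcal{X}} P_i(x)\ln\frac{P_i(x)}{\overline{P}'(x)}\,dx$ where $\overline{P}' = \prod_{j=1}^M P_j^{\pi_j}$ is the weighted geometric mean (not necessarily a probability density); it is called the Jensen–Shannon divergence with geometric mean. *)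

theory Defs
  imports "HOL-Analysis.Analysis"
begin

definition is_density :: "'a measure \<Rightarrow> ('a \<Rightarrow> real) \<Rightarrow> bool" where
  "is_density M f \<longleftrightarrow> f \<in> borel_measurable M \<and> (\<forall>x\<in>space M. 0 \<le> f x)
     \<and> (\<integral>\<^sup>+ x. ennreal (f x) \<partial>M) = 1"

definition ext_integral :: "'a measure \<Rightarrow> ('a \<Rightarrow> ereal) \<Rightarrow> ereal" where
  "ext_integral M f =
     enn2ereal (\<integral>\<^sup>+ x. e2ennreal (f x) \<partial>M) - enn2ereal (\<integral>\<^sup>+ x. e2ennreal (- f x) \<partial>M)"

definition KL_div :: "'a measure \<Rightarrow> ('a \<Rightarrow> real) \<Rightarrow> ('a \<Rightarrow> real) \<Rightarrow> ereal" where
  "KL_div M P Q = ext_integral M (\<lambda>x.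
     if P x = 0 then 0 else if Q x = 0 then \<infinity> else ereal (P x * ln (P x / Q x)))"

end

theory Submission
  imports Defs
begin
definition H :: "real \<Rightarrow> real \<Rightarrow> ereal" where
 "H p q = (if p = 0 then 0 else if q = 0 then \<infinity> else ereal (p * ln (p / q)))"
definition Phi :: "real \<Rightarrow> real \<Rightarrow> ereal" where
 "Phi p q = (if p = 0 then ereal q else if q = 0 then \<infinity> else ereal (p * ln (p / q) - p + q))"

lemma meas_H: "P \<in> borel_measurable M \<Longrightarrow> Q \<in> borel_measurable M \<Longrightarrow>
  (\<lambda>x. e2ennreal (H (P x) (Q x))) \<in> borel_measurable M \<and>
  (\<lambda>x. e2ennreal (- H (P x) (Q x))) \<in> borel_measurable M \<and>
  (\<lambda>x. e2ennreal (Phi (P x) (Q x))) \<in> borel_measurable M"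
  unfolding H_def Phi_def by measurable

lemma meas_w: "P \<in> borel_measurable M \<Longrightarrow> Q \<in> borel_measurable M \<Longrightarrow>
  (\<lambda>x. ennreal c * e2ennreal (Phi (P x) (Q x))) \<in> borel_measurable M"
  by (intro borel_measurable_times_ennreal borel_measurable_const) (use meas_H in blast)

lemma negbound: assumes "p \<ge> 0" "q \<ge> 0" shows "e2ennreal (- H p q) \<le> ennreal q"
proof -
  consider "p = 0" | "p > 0" "q = 0" | "p > 0" "q > 0" using assms by linarith
  then show ?thesis
  proof cases
    case 3
    have "ln (q / p) \<le> q / p - 1" using 3 by (intro ln_le_minus_one) auto
    hence "p * ln (q/p) \<le> p * (q/p - 1)" using 3 by (intro mult_left_mono) auto
    also have "\<dots> = q - p" using 3 by (simp add: field_simps)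
    finally have "- (p * ln (p / q)) \<le> q" using 3 assms by (simp add: ln_div right_diff_distrib)
    then show ?thesis using 3 by (simp add: H_def ennreal_leI)
  qed (auto simp: H_def e2ennreal_neg)
qed

lemma ident: assumes "p \<ge> 0" "q \<ge> 0"
  shows "e2ennreal (H p q) + ennreal q = e2ennreal (Phi p q) + e2ennreal (- H p q) + ennreal p"
proof -
  consider "p = 0" | "p > 0" "q = 0" | "p > 0" "q > 0" using assms by linarith
  then show ?thesis
  proof cases
    case 3
    define t where "t = p * ln (p / q)"
    have phi: "t - p + q \<ge> 0"
    proof -
      have "ln (q / p) \<le> q / p - 1" using 3 by (intro ln_le_minus_one) auto
      hence "p * ln (q/p) \<le> p * (q/p - 1)" using 3 by (intro mult_left_mono) auto
      also have "\<dots> = q - p" using 3 by (simp add: field_simps)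
      finally show ?thesis using 3 by (simp add: t_def ln_div right_diff_distrib)
    qed
    show ?thesis
    proof (cases "t \<ge> 0")
      case True
      then show ?thesis using 3 phi assms
        by (simp add: H_def Phi_def t_def[symmetric] ennreal_neg flip: ennreal_plus)
    next
      case False
      then show ?thesis using 3 phi assms
        by (simp add: H_def Phi_def t_def[symmetric] ennreal_neg flip: ennreal_plus)
    qed
  qed (auto simp: H_def Phi_def)
qed

lemma KL_Phi:
  assumes P: "is_density M P" and Q: "is_density M Q"
  shows "KL_div M P Q = enn2ereal (\<integral>\<^sup>+ x. e2ennreal (Phi (P x) (Q x)) \<partial>M)"
proof -
  have Pm: "P \<in> borel_measurable M" and Pn: "\<And>x. x \<in> space M \<Longrightarrow> 0 \<le> P x"
    and P1: "(\<integral>\<^sup>+ x. ennreal (P x) \<partial>M) = 1" using P by (auto simp: is_density_def)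
  have Qm: "Q \<in> borel_measurable M" and Qn: "\<And>x. x \<in> space M \<Longrightarrow> 0 \<le> Q x"
    and Q1: "(\<integral>\<^sup>+ x. ennreal (Q x) \<partial>M) = 1" using Q by (auto simp: is_density_def)
  note ms = meas_H[OF Pm Qm]
  define A where "A = (\<integral>\<^sup>+ x. e2ennreal (H (P x) (Q x)) \<partial>M)"
  define B where "B = (\<integral>\<^sup>+ x. e2ennreal (- H (P x) (Q x)) \<partial>M)"
  define C where "C = (\<integral>\<^sup>+ x. e2ennreal (Phi (P x) (Q x)) \<partial>M)"
  have "A + 1 = (\<integral>\<^sup>+ x. e2ennreal (H (P x) (Q x)) + ennreal (Q x) \<partial>M)"
    unfolding A_def Q1[symmetric] by (rule nn_integral_add[symmetric]) (use ms Qm in auto)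
  also have "\<dots> = (\<integral>\<^sup>+ x. e2ennreal (Phi (P x) (Q x)) + e2ennreal (- H (P x) (Q x)) + ennreal (P x) \<partial>M)"
    by (rule nn_integral_cong) (use ident Pn Qn in auto)
  also have "\<dots> = (\<integral>\<^sup>+ x. e2ennreal (Phi (P x) (Q x)) + e2ennreal (- H (P x) (Q x)) \<partial>M) + 1"
    unfolding P1[symmetric] by (rule nn_integral_add) (use ms Pm in \<open>auto intro!: borel_measurable_add\<close>)
  also have "\<dots> = C + B + 1"
    unfolding C_def B_def using ms by (subst nn_integral_add) auto
  finally have eq: "A + 1 = C + B + 1" .
  hence AB: "A = C + B"
    using ennreal_add_left_cancel[of 1 A "C + B"] by (simp add: add.commute)
  have "B \<le> (\<integral>\<^sup>+ x. ennreal (Q x) \<partial>M)"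
    unfolding B_def by (rule nn_integral_mono) (use negbound Pn Qn in auto)
  hence Bfin: "B < \<infinity>" using Q1 ennreal_one_less_top order_le_less_trans[of B 1 top] by simp
  have "enn2ereal B \<noteq> \<infinity>" using Bfin by simp
  moreover have "enn2ereal B \<noteq> -\<infinity>" using enn2ereal_nonneg[of B] by auto
  ultimately obtain b where b: "enn2ereal B = ereal b"
    by (cases "enn2ereal B") auto
  have "KL_div M P Q = enn2ereal A - enn2ereal B"
    unfolding KL_div_def ext_integral_def A_def B_def H_def by simp
  also have "\<dots> = enn2ereal C"
    unfolding AB plus_ennreal.rep_eq b by (cases "enn2ereal C") auto
  finally show ?thesis unfolding C_def .
qed

lemma jensen_ln:
  assumes "finite S" "S \<noteq> {}" "(\<Sum>j\<in>S. w j) = 1" "\<And>j. j \<in> S \<Longrightarrow> w j \<ge> 0"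
    "\<And>j. j \<in> S \<Longrightarrow> (p j::real) > 0"
  shows "(\<Sum>j\<in>S. w j * ln (p j)) \<le> ln (\<Sum>j\<in>S. w j * p j)"
proof -
  have c: "convex_on {0<..} (\<lambda>x. - ln x)" using ln_concave by (simp add: concave_on_def)
  have "- ln (\<Sum>j\<in>S. w j *\<^sub>R p j) \<le> (\<Sum>j\<in>S. w j * - ln (p j))"
    by (rule convex_on_sum[OF assms(1,2) c assms(3)]) (use assms in auto)
  then show ?thesis by (simp add: sum_negf)
qed

lemma phi_nonneg: "(p::real) > 0 \<Longrightarrow> q > 0 \<Longrightarrow> 0 \<le> p * ln (p / q) - p + q"
proof -
  assume 3: "p > 0" "q > 0"
  have "ln (q / p) \<le> q / p - 1" using 3 by (intro ln_le_minus_one) auto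
  hence "p * ln (q/p) \<le> p * (q/p - 1)" using 3 by (intro mult_left_mono) auto
  also have "\<dots> = q - p" using 3 by (simp add: field_simps)
  finally show ?thesis using 3 by (simp add: ln_div right_diff_distrib)
qed

lemma pointwise:
  assumes I: "finite I" and i: "i \<in> I" and w0: "\<And>j. j \<in> I \<Longrightarrow> 0 \<le> w j"
    and w1: "(\<Sum>j\<in>I. w j) = 1" and p0: "\<And>j. j \<in> I \<Longrightarrow> 0 \<le> (p j::real)"
  shows "e2ennreal (Phi (p i) (\<Sum>j\<in>I. w j * p j))
     \<le> (\<Sum>j\<in>I-{i}. ennreal (w j) * e2ennreal (Phi (p i) (p j)))"
proof -
  consider "p i = 0" | "p i > 0" "\<exists>j\<in>I-{i}. w j > 0 \<and> p j = 0"
    | "p i > 0" "\<forall>j\<in>I-{i}. w j > 0 \<longrightarrow> p j > 0"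
    using p0[OF i] p0 by force
  then show ?thesis
  proof cases
    case 1
    have "(\<Sum>j\<in>I-{i}. ennreal (w j) * e2ennreal (Phi (p i) (p j)))
        = (\<Sum>j\<in>I-{i}. ennreal (w j * p j))"
      by (rule sum.cong) (use 1 w0 p0 in \<open>auto simp: Phi_def ennreal_mult\<close>)
    also have "\<dots> = ennreal (\<Sum>j\<in>I-{i}. w j * p j)"
      by (rule sum_ennreal) (use w0 p0 in auto)
    also have "(\<Sum>j\<in>I-{i}. w j * p j) = (\<Sum>j\<in>I. w j * p j)"
      using 1 i I by (simp add: sum_diff1)
    finally show ?thesis using 1 by (simp add: Phi_def)
  next
    case 2
    then obtain j where j: "j \<in> I-{i}" "w j > 0" "p j = 0" by blast
    have "ennreal (w j) * e2ennreal (Phi (p i) (p j)) = top"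
      using j 2 by (simp add: Phi_def)
    moreover have "ennreal (w j) * e2ennreal (Phi (p i) (p j))
       \<le> (\<Sum>j\<in>I-{i}. ennreal (w j) * e2ennreal (Phi (p i) (p j)))"
      by (rule member_le_sum) (use j I in auto)
    ultimately show ?thesis by (simp add: top_unique)
  next
    case 3
    define S where "S = {j\<in>I. w j > 0}"
    have SI: "S \<subseteq> I" "finite S" using I by (auto simp: S_def)
    have Spos: "\<And>j. j \<in> S \<Longrightarrow> p j > 0" using 3 by (auto simp: S_def)
    have wS: "(\<Sum>j\<in>S. w j) = 1"
      using w1 by (subst sum.mono_neutral_left[OF I SI(1)]) (use w0 in \<open>force simp: S_def less_le\<close>)
    hence Sne: "S \<noteq> {}" by auto
    define q where "q = (\<Sum>j\<in>I. w j * p j)"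
    have qS: "q = (\<Sum>j\<in>S. w j * p j)"
      unfolding q_def by (rule sum.mono_neutral_right[OF I SI(1)]) (use w0 in \<open>force simp: S_def less_le\<close>)
    have qpos: "q > 0" unfolding qS
      by (rule sum_pos[OF SI(2) Sne]) (use Spos in \<open>auto simp: S_def\<close>)
    define phi where "phi j = p i * ln (p i / p j) - p i + p j" for j
    have phi0: "\<And>j. j \<in> S \<Longrightarrow> phi j \<ge> 0" unfolding phi_def using Spos 3 phi_nonneg by auto
    have phii: "phi i = 0" using 3 by (simp add: phi_def)
    have "(\<Sum>j\<in>I-{i}. ennreal (w j) * e2ennreal (Phi (p i) (p j)))
        = (\<Sum>j\<in>S-{i}. ennreal (w j * phi j))"
    proof (rule sum.mono_neutral_cong_right)
      show "finite (I - {i})" using I by auto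
      show "S - {i} \<subseteq> I - {i}" using SI by auto
      show "\<forall>j\<in>I - {i} - (S - {i}). ennreal (w j) * e2ennreal (Phi (p i) (p j)) = 0"
      proof
        fix j assume "j \<in> I - {i} - (S - {i})"
        hence "w j = 0" using w0 by (force simp: S_def)
        then show "ennreal (w j) * e2ennreal (Phi (p i) (p j)) = 0" by simp
      qed
      show "\<And>j. j \<in> S - {i} \<Longrightarrow> ennreal (w j) * e2ennreal (Phi (p i) (p j)) = ennreal (w j * phi j)"
      proof -
        fix j assume j: "j \<in> S - {i}"
        hence "p j > 0" "phi j \<ge> 0" "w j \<ge> 0" using Spos phi0 w0 SI by auto
        then show "ennreal (w j) * e2ennreal (Phi (p i) (p j)) = ennreal (w j * phi j)"
          using 3 by (simp add: Phi_def phi_def ennreal_mult)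
      qed
    qed
    also have "\<dots> = ennreal (\<Sum>j\<in>S-{i}. w j * phi j)"
      by (rule sum_ennreal) (use w0 phi0 SI in auto)
    also have "(\<Sum>j\<in>S-{i}. w j * phi j) = (\<Sum>j\<in>S. w j * phi j)"
      using phii SI by (simp add: sum_diff1)
    finally have R: "(\<Sum>j\<in>I-{i}. ennreal (w j) * e2ennreal (Phi (p i) (p j)))
        = ennreal (\<Sum>j\<in>S. w j * phi j)" .
    have J: "(\<Sum>j\<in>S. w j * ln (p j)) \<le> ln q"
      unfolding qS by (rule jensen_ln[OF SI(2) Sne wS]) (use w0 SI Spos in auto)
    have "(\<Sum>j\<in>S. w j * phi j)
        = (\<Sum>j\<in>S. w j) * (p i * ln (p i) - p i) - p i * (\<Sum>j\<in>S. w j * ln (p j)) + (\<Sum>j\<in>S. w j * p j)"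
    proof -
      have "(\<Sum>j\<in>S. w j * phi j) = (\<Sum>j\<in>S. w j * (p i * ln (p i) - p i) - p i * (w j * ln (p j)) + w j * p j)"
      proof (rule sum.cong)
        fix j assume "j \<in> S"
        hence "p j > 0" using Spos by auto
        then show "w j * phi j = w j * (p i * ln (p i) - p i) - p i * (w j * ln (p j)) + w j * p j"
          using 3 by (simp add: phi_def ln_div algebra_simps)
      qed simp
      also have "\<dots> = (\<Sum>j\<in>S. w j) * (p i * ln (p i) - p i) - p i * (\<Sum>j\<in>S. w j * ln (p j)) + (\<Sum>j\<in>S. w j * p j)"
        by (simp add: sum.distrib sum_subtractf sum_distrib_left sum_distrib_right)
      finally show ?thesis .
    qed
    also have "\<dots> = p i * ln (p i) - p i - p i * (\<Sum>j\<in>S. w j * ln (p j)) + q"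
      using wS qS by simp
    finally have E: "(\<Sum>j\<in>S. w j * phi j) = p i * ln (p i) - p i - p i * (\<Sum>j\<in>S. w j * ln (p j)) + q" .
    have "p i * (\<Sum>j\<in>S. w j * ln (p j)) \<le> p i * ln q"
      using J 3 by (intro mult_left_mono) auto
    hence ineq: "p i * ln (p i / q) - p i + q \<le> (\<Sum>j\<in>S. w j * phi j)"
      unfolding E using 3 qpos by (simp add: ln_div right_diff_distrib)
    have "e2ennreal (Phi (p i) q) = ennreal (p i * ln (p i / q) - p i + q)"
      using 3 qpos by (simp add: Phi_def)
    also have "\<dots> \<le> ennreal (\<Sum>j\<in>S. w j * phi j)" using ineq by (rule ennreal_leI)
    finally show ?thesis unfolding R q_def .
  qed
qed

lemma ereal_enn: "0 \<le> a \<Longrightarrow> ereal a * enn2ereal X = enn2ereal (ennreal a * X)"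
  by (simp add: times_ennreal.rep_eq)

theorem proposition2:
  fixes M :: "'a measure" and P :: "nat \<Rightarrow> 'a \<Rightarrow> real" and w :: "nat \<Rightarrow> real" and m :: nat
  assumes dens: "\<And>i. i \<in> {1..m} \<Longrightarrow> is_density M (P i)"
    and w_range: "\<And>i. i \<in> {1..m} \<Longrightarrow> 0 \<le> w i \<and> w i \<le> 1"
    and w_sum: "(\<Sum>i\<in>{1..m}. w i) = 1"
  shows "(\<Sum>i\<in>{1..m}. ereal (w i) * KL_div M (P i) (\<lambda>x. \<Sum>j\<in>{1..m}. w j * P j x))
       \<le> (\<Sum>i\<in>{1..m}. \<Sum>j\<in>{1..m} - {i}. ereal (w i * w j) * KL_div M (P i) (P j))"
proof -
  define I where "I = {1..m}"
  define Q where "Q = (\<lambda>x. \<Sum>j\<in>I. w j * P j x)"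
  have w0: "\<And>j. j \<in> I \<Longrightarrow> 0 \<le> w j" using w_range I_def by auto
  have Pm: "\<And>j. j \<in> I \<Longrightarrow> P j \<in> borel_measurable M"
    and Pn: "\<And>j x. j \<in> I \<Longrightarrow> x \<in> space M \<Longrightarrow> 0 \<le> P j x"
    and P1: "\<And>j. j \<in> I \<Longrightarrow> (\<integral>\<^sup>+ x. ennreal (P j x) \<partial>M) = 1"
    using dens unfolding I_def is_density_def by auto
  have Qd: "is_density M Q"
    unfolding is_density_def
  proof (intro conjI ballI)
    show "Q \<in> borel_measurable M" unfolding Q_def using Pm by (auto intro!: borel_measurable_sum)
    fix x assume "x \<in> space M"
    then show "0 \<le> Q x" unfolding Q_def using w0 Pn by (auto intro!: sum_nonneg)
  next
    have "(\<integral>\<^sup>+ x. ennreal (Q x) \<partial>M) = (\<integral>\<^sup>+ x. (\<Sum>j\<in>I. ennreal (w j) * ennreal (P j x)) \<partial>M)"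
      unfolding Q_def
      by (rule nn_integral_cong) (use w0 Pn in \<open>auto simp: ennreal_mult simp flip: sum_ennreal intro!: sum_nonneg\<close>)
    also have "\<dots> = (\<Sum>j\<in>I. ennreal (w j) * (\<integral>\<^sup>+ x. ennreal (P j x) \<partial>M))"
      using Pm by (subst nn_integral_sum) (auto simp: nn_integral_cmult)
    also have "\<dots> = (\<Sum>j\<in>I. ennreal (w j))" using P1 by simp
    also have "\<dots> = ennreal (\<Sum>j\<in>I. w j)" using w0 by (rule sum_ennreal)
    also have "\<dots> = 1" using w_sum I_def by simp
    finally show "(\<integral>\<^sup>+ x. ennreal (Q x) \<partial>M) = 1" .
  qed
  define K where "K i j = (\<integral>\<^sup>+ x. e2ennreal (Phi (P i x) (P j x)) \<partial>M)" for i j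
  define L where "L i = (\<integral>\<^sup>+ x. e2ennreal (Phi (P i x) (Q x)) \<partial>M)" for i
  have KK: "\<And>i j. i \<in> I \<Longrightarrow> j \<in> I \<Longrightarrow> KL_div M (P i) (P j) = enn2ereal (K i j)"
    unfolding K_def using dens I_def by (intro KL_Phi) auto
  have LL: "\<And>i. i \<in> I \<Longrightarrow> KL_div M (P i) Q = enn2ereal (L i)"
    unfolding L_def using dens I_def Qd by (intro KL_Phi) auto
  have Li: "L i \<le> (\<Sum>j\<in>I-{i}. ennreal (w j) * K i j)" if i: "i \<in> I" for i
  proof -
    have "L i \<le> (\<integral>\<^sup>+ x. (\<Sum>j\<in>I-{i}. ennreal (w j) * e2ennreal (Phi (P i x) (P j x))) \<partial>M)"
      unfolding L_def Q_def
      by (rule nn_integral_mono) (rule pointwise, use I_def i w0 w_sum Pn in auto)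
    also have "\<dots> = (\<Sum>j\<in>I-{i}. ennreal (w j) * K i j)"
      unfolding K_def using Pm i
      by (subst nn_integral_sum) (auto simp: nn_integral_cmult meas_H meas_w)
    finally show ?thesis .
  qed
  have "(\<Sum>i\<in>I. ereal (w i) * KL_div M (P i) Q) = enn2ereal (\<Sum>i\<in>I. ennreal (w i) * L i)"
    using w0 by (simp add: LL ereal_enn)
  also have "\<dots> \<le> enn2ereal (\<Sum>i\<in>I. \<Sum>j\<in>I-{i}. ennreal (w i * w j) * K i j)"
  proof -
    have "(\<Sum>i\<in>I. ennreal (w i) * L i) \<le> (\<Sum>i\<in>I. \<Sum>j\<in>I-{i}. ennreal (w i * w j) * K i j)"
    proof (rule sum_mono)
      fix i assume i: "i \<in> I"
      have "ennreal (w i) * L i \<le> ennreal (w i) * (\<Sum>j\<in>I-{i}. ennreal (w j) * K i j)"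
        using Li[OF i] by (rule mult_left_mono) simp
      also have "\<dots> = (\<Sum>j\<in>I-{i}. ennreal (w i * w j) * K i j)"
        using w0 i by (auto simp: sum_distrib_left ennreal_mult mult.assoc intro!: sum.cong)
      finally show "ennreal (w i) * L i \<le> (\<Sum>j\<in>I-{i}. ennreal (w i * w j) * K i j)" .
    qed
    then show ?thesis by (simp add: less_eq_ennreal.rep_eq)
  qed
  also have "\<dots> = (\<Sum>i\<in>I. \<Sum>j\<in>I-{i}. ereal (w i * w j) * KL_div M (P i) (P j))"
    using w0 by (simp add: KK ereal_enn)
  finally show ?thesis unfolding I_def Q_def .
qed
end
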